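(* Let $N\ge 1$, let $1\ge x^{(1)}>x^{(2)}>\dots>x^{(N)}\ge 0$ and $y^{(1)},\dots,y^{(N)}\in\mathbb{R}$. For $a>0$ let $TNN_a$ be the triangularly-constructed network described in the context, and let $\delta(a)=1-\sigma(a)$. Then for every $k=1,\dots,N$, $$\big|TNN_a(x^{(k)})-y^{(k)}\big|\le (N+1)\,\delta(a)\,\max_{1\le j\le N}|y^{(j)}|.$$ Consequently, for every $\epsilon>0$ there exists $a>0$ such that $|TNN_a(x^{(k)})-y^{(k)}|\le\epsilon$ for all $k=1,\dots,N$ (in particular the average error $\frac1N\sum_k|TNN_a(x^{(k)})-y^{(k)}|\le\epsilon$).
   Context: Let $\sigma(t)=1/(1+e^{-t})$ be the sigmoid; note $\sigma(-a)=1-\sigma(a)$. Data: $1\ge x^{(1)}>x^{(2)}>\dots>x^{(N)}\ge0$ with labels $y^{(k)}\in\mathbb{R}$. Set $\Delta^{(k)}=x^{(k)}-x^{(k+1)}$ for $k=1,\dots,N-1$, and let $\Delta^{(N)}>0$ be an arbitrary fixed positive number (equivalently $\Delta^{(N)}=x^{(N)}-x^{(N+1)}$ for a dummy point $x^{(N+1)}<x^{(N)}$). Given $a>0$, define $W,b\in\mathbb{R}^N$ by $W_{N-k+1}=2a/\Delta^{(k)}$ and $b_{N-k+1}=a-W_{N-k+1}x^{(k)}$ for $k=1,\dots,N$. Define $\alpha\in\mathbb{R}^N$ by $\alpha_i=y^{(N-i+1)}-y^{(N-i+2)}$ for $i=1,\dots,N$, with the convention $y^{(N+1)}:=0$ (so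 that $y^{(k)}=\sum_{i=1}^{N-k+1}\alpha_i$). The triangularly-constructed neural network is $TNN_a(x)=\sum_{i=1}^N\alpha_i\,\sigma(W_ix+b_i)$ for $x\in\mathbb{R}$. *)

theory Defs
  imports "HOL-Analysis.Analysis"
begin

definition sigmoid :: "real \<Rightarrow> real" where
  "sigmoid t = 1 / (1 + exp (- t))"

text \<open>Data points x 1 > ... > x N and labels y 1, ..., y N are functions on nat,
  indexed 1..N.  dN is the arbitrary fixed positive number Delta^(N).\<close>

definition gap :: "nat \<Rightarrow> (nat \<Rightarrow> real) \<Rightarrow> real \<Rightarrow> nat \<Rightarrow> real" where
  "gap N x dN k = (if k < N then x k - x (k + 1) else dN)"

definition tnnW :: "nat \<Rightarrow> (nat \<Rightarrow> real) \<Rightarrow> real \<Rightarrow> real \<Rightarrow> nat \<Rightarrow> real" where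
  "tnnW N x dN a i = 2 * a / gap N x dN (N - i + 1)"

definition tnnb :: "nat \<Rightarrow> (nat \<Rightarrow> real) \<Rightarrow> real \<Rightarrow> real \<Rightarrow> nat \<Rightarrow> real" where
  "tnnb N x dN a i = a - tnnW N x dN a i * x (N - i + 1)"

definition tnnalpha :: "nat \<Rightarrow> (nat \<Rightarrow> real) \<Rightarrow> nat \<Rightarrow> real" where
  "tnnalpha N y i = y (N - i + 1) - (if i = 1 then 0 else y (N - i + 2))"

definition TNN :: "nat \<Rightarrow> (nat \<Rightarrow> real) \<Rightarrow> (nat \<Rightarrow> real) \<Rightarrow> real \<Rightarrow> real \<Rightarrow> real \<Rightarrow> real" where
  "TNN N x y dN a t = (\<Sum>i = 1..N. tnnalpha N y i * sigmoid (tnnW N x dN a i * t + tnnb N x dN a i))"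

end

theory Submission
  imports Defs
begin

lemma sig_pos: "sigmoid t > 0" unfolding sigmoid_def by (simp add: add_pos_pos)
lemma sig_lt1: "sigmoid t < 1" unfolding sigmoid_def by (simp add: add_pos_pos)
lemma sig_aux: "1 / (1 + exp t) + exp t / (1 + exp t) = (1::real)"
proof -
  have "(1::real) + exp t \<noteq> 0" by (smt (verit) exp_gt_zero)
  thus ?thesis by (simp add: add_divide_distrib[symmetric])
qed
lemma sig_neg: "sigmoid (-t) = 1 - sigmoid t"
  unfolding sigmoid_def using sig_aux[of t] by (simp add: field_simps exp_minus add_pos_pos)
lemma sig_mono: "s \<le> t \<Longrightarrow> sigmoid s \<le> sigmoid t"
  unfolding sigmoid_def by (simp add: frac_le add_pos_pos)
lemma one_minus_sig: "1 - sigmoid a = 1 / (1 + exp a)"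
  unfolding sigmoid_def using sig_aux[of a] by (simp add: field_simps exp_minus add_pos_pos)

lemma termL: fixes c u dl M :: real
  assumes "0 \<le> u" "u \<le> dl" "\<bar>c\<bar> \<le> 2*M" shows "c*u \<le> dl*(M + c/2)"
proof (cases "c \<ge> 0")
  case True then have "c*u \<le> c*dl" using assms by (intro mult_left_mono) auto
  also have "\<dots> \<le> dl*(M+c/2)"
  proof -
    have "c/2 \<le> M+c/2 - c/2" using assms True by simp
    hence "c \<le> M + c/2" by linarith
    hence "dl*c \<le> dl*(M+c/2)" using assms by (intro mult_left_mono) auto
    thus ?thesis by (simp add: mult.commute)
  qed
  finally show ?thesis .
next
  case False then have "c*u \<le> 0" using assms by (intro mult_nonpos_nonneg) auto
  also have "0 \<le> dl*(M+c/2)" using assms False by (intro mult_nonneg_nonneg) auto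
  finally show ?thesis .
qed

lemma termR: fixes c u dl M :: real
  assumes "1-dl \<le> u" "u \<le> 1" "\<bar>c\<bar> \<le> 2*M" shows "c*(u-1) \<le> dl*(M - c/2)"
proof -
  have "(-c)*(1-u) \<le> dl*(M + (-c)/2)" using assms by (intro termL) auto
  thus ?thesis by (simp add: algebra_simps)
qed

lemma termN: fixes c u dl M :: real
  assumes "1-dl \<le> u" "u \<le> 1" "\<bar>c\<bar> \<le> M" shows "c*(u-1) \<le> dl*(M/2 - c/2)"
proof -
  have "(-c)*(1-u) \<le> dl*(M/2 + (-c)/2)" using assms by (intro termL) auto
  thus ?thesis by (simp add: algebra_simps)
qed


lemma tele: "m \<le> n \<Longrightarrow> (\<Sum>i=m..<n. (Y::nat\<Rightarrow>real) i - Y (Suc i)) = Y m - Y n"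
  using sum_Suc_diff'[of m n Y] by (simp add: sum_subtractf)

lemma key:
  fixes Y s :: "nat \<Rightarrow> real" and N k :: nat and dl M :: real
  assumes k1: "1 \<le> k" and kN: "k \<le> N" and Y0: "Y (Suc N) = 0"
    and YM: "\<forall>j\<in>{1..N}. \<bar>Y j\<bar> \<le> M" and dl: "dl \<ge> 0"
    and sL: "\<forall>j. 1 \<le> j \<and> j < k \<longrightarrow> 0 \<le> s j \<and> s j \<le> dl"
    and sk: "s k = 1 - dl"
    and sR: "\<forall>j. k < j \<and> j \<le> N \<longrightarrow> 1-dl \<le> s j \<and> s j \<le> 1"
  shows "(\<Sum>j=1..N. (Y j - Y (Suc j)) * s j) - Y k \<le> (real N + 1) * dl * M"
proof -
  define d where "d j = Y j - Y (Suc j)" for j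
  have Y1: "\<bar>Y 1\<bar> \<le> M" and Yk: "\<bar>Y k\<bar> \<le> M" and YN: "\<bar>Y N\<bar> \<le> M"
    using YM k1 kN by auto
  have dM: "\<bar>d j\<bar> \<le> 2*M" if "1 \<le> j" "j < N" for j
    using YM that unfolding d_def by (smt (verit) Suc_leI atLeastAtMost_iff le_SucI less_imp_le_nat)
  have L: "(\<Sum>j=1..<k. d j * s j) \<le> dl * (M * (real k - 1) + (Y 1 - Y k)/2)"
  proof -
    have "(\<Sum>j=1..<k. d j * s j) \<le> (\<Sum>j=1..<k. dl * (M + d j / 2))"
      using sL dM kN by (intro sum_mono termL) auto
    also have "\<dots> = dl * (M * real (k - 1) + (\<Sum>j=1..<k. d j) / 2)"
      by (simp add: sum_distrib_left[symmetric] sum.distrib sum_divide_distrib[symmetric])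
    also have "(\<Sum>j=1..<k. d j) = Y 1 - Y k" unfolding d_def using tele k1 by blast
    finally show ?thesis using k1 by (simp add: of_nat_diff)
  qed
  have S: "(\<Sum>j=1..N. d j * s j) = (\<Sum>j=1..<k. d j * s j) + (\<Sum>j=k..<Suc N. d j * s j)"
    using k1 kN by (simp add: atLeastLessThanSuc_atLeastAtMost[symmetric] sum.atLeastLessThan_concat)
  have S2: "(\<Sum>j=k..<Suc N. d j * s j) = d k * s k + (\<Sum>j=Suc k..<Suc N. d j * s j)"
    using kN by (subst sum.atLeast_Suc_lessThan) auto
  have M0: "M \<ge> 0" using Y1 by simp
  show ?thesis
  proof (cases "k = N")
    case True
    have dN: "d N = Y N" using Y0 unfolding d_def by simp
    have "(\<Sum>j=1..N. d j * s j) - Y k = (\<Sum>j=1..<k. d j * s j) - dl * Y N"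
    proof -
      have "s N = 1 - dl" using sk True by simp
      hence "Y N * s N = Y N - dl * Y N" by (simp add: right_diff_distrib mult.commute)
      thus ?thesis using S S2 True dN by (simp add: algebra_simps)
    qed
    also have "\<dots> \<le> dl * (M * (real N - 1) + Y 1 / 2 - 3 * Y N / 2)"
      using L True by (simp add: algebra_simps diff_divide_distrib)
    also have "\<dots> \<le> dl * ((real N + 1) * M)"
      using Y1 YN dl by (intro mult_left_mono) (auto simp: algebra_simps abs_le_iff)
    finally show ?thesis unfolding d_def by (simp add: algebra_simps)
  next
    case False
    hence kN': "k < N" using kN by simp
    have dN: "d N = Y N" using Y0 unfolding d_def by simp
    have S3: "(\<Sum>j=Suc k..<Suc N. d j * s j) = (\<Sum>j=Suc k..<N. d j * s j) + Y N * s N"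
      using kN' dN by simp
    have R: "(\<Sum>j=Suc k..<N. d j * (s j - 1)) \<le> dl * (M * (real N - real k - 1) - (Y (Suc k) - Y N)/2)"
    proof -
      have "(\<Sum>j=Suc k..<N. d j * (s j - 1)) \<le> (\<Sum>j=Suc k..<N. dl * (M - d j / 2))"
        using sR dM k1 by (intro sum_mono termR) auto
      also have "\<dots> = dl * (M * real (N - Suc k) - (\<Sum>j=Suc k..<N. d j) / 2)"
        by (simp add: sum_distrib_left[symmetric] sum_subtractf sum_divide_distrib[symmetric] right_diff_distrib)
      also have "(\<Sum>j=Suc k..<N. d j) = Y (Suc k) - Y N" unfolding d_def using tele kN' by auto
      finally show ?thesis using kN' by (simp add: of_nat_diff diff_diff_eq add.commute)
    qed
    have T: "(\<Sum>j=Suc k..<N. d j) = Y (Suc k) - Y N" unfolding d_def using tele kN' by auto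
    have RR: "(\<Sum>j=Suc k..<N. d j * s j) = (\<Sum>j=Suc k..<N. d j * (s j - 1)) + (Y (Suc k) - Y N)"
      by (simp add: T[symmetric] sum.distrib[symmetric] algebra_simps)
    have NN: "Y N * (s N - 1) \<le> dl * (M/2 - Y N/2)"
      using sR kN' YN by (intro termN) auto
    have YS: "\<bar>Y (Suc k)\<bar> \<le> M" using YM kN' by auto
    have "(\<Sum>j=1..N. d j * s j) - Y k = (\<Sum>j=1..<k. d j * s j) + d k * (s k - 1)
          + (\<Sum>j=Suc k..<N. d j * (s j - 1)) + Y N * (s N - 1)"
      using S S2 S3 RR unfolding d_def by (simp add: algebra_simps)
    also have "\<dots> \<le> dl * (M * (real k - 1) + (Y 1 - Y k)/2) + dl * (Y (Suc k) - Y k)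
          + dl * (M * (real N - real k - 1) - (Y (Suc k) - Y N)/2) + dl * (M/2 - Y N/2)"
    proof -
      have "d k * (s k - 1) = dl * (Y (Suc k) - Y k)" unfolding d_def sk by (simp add: algebra_simps)
      thus ?thesis using L R NN by linarith
    qed
    also have "\<dots> = dl * (M * (real N - 3/2) + Y 1/2 - 3 * Y k/2 + Y (Suc k)/2)"
      by (simp add: algebra_simps diff_divide_distrib add_divide_distrib)
    also have "\<dots> \<le> dl * ((real N + 1) * M)"
      using Y1 Yk YS dl by (intro mult_left_mono) (auto simp: algebra_simps abs_le_iff)
    finally show ?thesis unfolding d_def by (simp add: algebra_simps)
  qed
qed


lemma xdec_gen:
  assumes "\<And>k. 1 \<le> k \<Longrightarrow> k < N \<Longrightarrow> (x::nat\<Rightarrow>real) k > x (k + 1)"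
  shows "1 \<le> i \<Longrightarrow> i < j \<Longrightarrow> j \<le> N \<Longrightarrow> x j < x i"
proof (induction j)
  case 0 then show ?case by simp
next
  case (Suc j)
  show ?case
  proof (cases "i = j")
    case True then show ?thesis using assms Suc.prems by simp
  next
    case False
    hence "x j < x i" using Suc by simp
    moreover have "x (Suc j) < x j" using assms[of j] Suc.prems False by simp
    ultimately show ?thesis by simp
  qed
qed

lemma rev_sum: "(\<Sum>i=1..N. F i) = (\<Sum>j=1..(N::nat). F (N+1-j))"
  by (rule sum.reindex_bij_witness[of _ "\<lambda>i. N+1-i" "\<lambda>i. N+1-i"]) auto

theorem theorem1:
  fixes N :: nat and x y :: "nat \<Rightarrow> real" and dN :: real
  assumes N: "N \<ge> 1"
    and x_le1: "x 1 \<le> 1"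
    and x_ge0: "x N \<ge> 0"
    and x_dec: "\<And>k. 1 \<le> k \<Longrightarrow> k < N \<Longrightarrow> x k > x (k + 1)"
    and dN: "dN > 0"
  shows "(\<forall>a>0. \<forall>k\<in>{1..N}.
            \<bar>TNN N x y dN a (x k) - y k\<bar>
              \<le> (real N + 1) * (1 - sigmoid a) * (MAX j\<in>{1..N}. \<bar>y j\<bar>))
       \<and> (\<forall>\<epsilon>>0. \<exists>a>0. (\<forall>k\<in>{1..N}. \<bar>TNN N x y dN a (x k) - y k\<bar> \<le> \<epsilon>)
             \<and> (\<Sum>k=1..N. \<bar>TNN N x y dN a (x k) - y k\<bar>) / real N \<le> \<epsilon>)"
proof -
  define M where "M = (MAX j\<in>{1..N}. \<bar>y j\<bar>)"
  have yM: "\<bar>y j\<bar> \<le> M" if "j \<in> {1..N}" for j unfolding M_def using that by (intro Max_ge) auto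
  have M0: "M \<ge> 0" using yM[of 1] N by (smt (verit) atLeastAtMost_iff order_refl)
  define Y where "Y j = (if j \<le> N then y j else 0)" for j
  have xd: "x j < x i" if "1 \<le> i" "i < j" "j \<le> N" for i j
    using xdec_gen[of N x i j] x_dec that by blast
  have gpos: "gap N x dN j > 0" if "1 \<le> j" "j \<le> N" for j
    using that x_dec[of j] dN unfolding gap_def by auto
  have bound: "\<bar>TNN N x y dN a (x k) - y k\<bar> \<le> (real N + 1) * (1 - sigmoid a) * M"
    if a: "a > 0" and k: "k \<in> {1..N}" for a k
  proof -
    define dl where "dl = 1 - sigmoid a"
    define s where "s j = sigmoid (tnnW N x dN a (N+1-j) * x k + tnnb N x dN a (N+1-j))" for j
    have sarg: "s j = sigmoid (a + 2*a / gap N x dN j * (x k - x j))" if "1 \<le> j" "j \<le> N" for j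
      unfolding s_def tnnW_def tnnb_def using that by (simp add: algebra_simps diff_divide_distrib)
    have dl0: "dl \<ge> 0" unfolding dl_def using sig_lt1[of a] by simp
    have TN: "TNN N x y dN a (x k) = (\<Sum>j=1..N. (Y j - Y (Suc j)) * s j)"
      unfolding TNN_def
      apply (subst rev_sum)
      apply (rule sum.cong[OF refl])
      unfolding tnnalpha_def s_def Y_def
      by (auto simp: Suc_diff_le numeral_2_eq_2)
    have sk: "s k = 1 - dl" using sarg[of k] k unfolding dl_def by simp
    have sL: "\<forall>j. 1 \<le> j \<and> j < k \<longrightarrow> 0 \<le> s j \<and> s j \<le> dl"
    proof (intro allI impI)
      fix j assume j: "1 \<le> j \<and> j < k"
      hence jN: "j < N" using k by simp
      have g: "gap N x dN j = x j - x (j+1)" using jN unfolding gap_def by simp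
      have gp: "gap N x dN j > 0" using gpos j jN by simp
      have "x k \<le> x (j+1)"
      proof (cases "j + 1 = k")
        case False thus ?thesis using xd[of "j+1" k] j k by force
      qed simp
      hence le: "x k - x j \<le> - gap N x dN j" using g by simp
      have "2*a / gap N x dN j * (x k - x j) \<le> 2*a / gap N x dN j * (- gap N x dN j)"
        using le a gp by (intro mult_left_mono) auto
      also have "\<dots> = -2*a" using gp by simp
      finally have "a + 2*a / gap N x dN j * (x k - x j) \<le> -a" by simp
      hence "s j \<le> sigmoid (-a)" using sarg[of j] j jN sig_mono by simp
      thus "0 \<le> s j \<and> s j \<le> dl" using sig_pos sig_neg unfolding dl_def s_def
        by (smt (verit))
    qed
    have sR: "\<forall>j. k < j \<and> j \<le> N \<longrightarrow> 1-dl \<le> s j \<and> s j \<le> 1"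
    proof (intro allI impI)
      fix j assume j: "k < j \<and> j \<le> N"
      have gp: "gap N x dN j > 0" using gpos j k by simp
      have "x j < x k" using xd[of k j] j k by simp
      hence "0 \<le> 2*a / gap N x dN j * (x k - x j)" using a gp by simp
      hence "sigmoid a \<le> s j" using sarg[of j] j k sig_mono by simp
      thus "1-dl \<le> s j \<and> s j \<le> 1" using sig_lt1 unfolding dl_def s_def by (smt (verit))
    qed
    have Y0: "Y (Suc N) = 0" unfolding Y_def by simp
    have YM: "\<forall>j\<in>{1..N}. \<bar>Y j\<bar> \<le> M" using yM unfolding Y_def by simp
    have YMn: "\<forall>j\<in>{1..N}. \<bar>- Y j\<bar> \<le> M" using YM by simp
    have Yk: "Y k = y k" using k unfolding Y_def by simp
    have k1: "1 \<le> k" "k \<le> N" using k by auto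
    have up: "(\<Sum>j=1..N. (Y j - Y (Suc j)) * s j) - Y k \<le> (real N + 1) * dl * M"
      by (rule key[OF k1 Y0 YM dl0 sL sk sR])
    have lo: "(\<Sum>j=1..N. (- Y j - - Y (Suc j)) * s j) - - Y k \<le> (real N + 1) * dl * M"
      by (rule key[OF k1 _ YMn dl0 sL sk sR]) (simp add: Y0)
    have "(\<Sum>j=1..N. (- Y j - - Y (Suc j)) * s j) = - (\<Sum>j=1..N. (Y j - Y (Suc j)) * s j)"
      by (simp add: sum_negf[symmetric] algebra_simps)
    thus ?thesis using up lo TN Yk unfolding dl_def by linarith
  qed
  show ?thesis
  proof (intro conjI allI impI ballI)
    fix a k assume "(0::real) < a" "k \<in> {1..N}"
    thus "\<bar>TNN N x y dN a (x k) - y k\<bar> \<le> (real N + 1) * (1 - sigmoid a) * (MAX j\<in>{1..N}. \<bar>y j\<bar>)"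
      using bound unfolding M_def by blast
  next
    fix \<epsilon> :: real assume e: "\<epsilon> > 0"
    define C where "C = (real N + 1) * M"
    have C0: "C \<ge> 0" unfolding C_def using M0 by simp
    define a where "a = \<bar>ln ((C+1)/\<epsilon>)\<bar> + 1"
    have a0: "a > 0" unfolding a_def by simp
    have "exp a \<ge> exp (ln ((C+1)/\<epsilon>))" unfolding a_def by simp
    also have "exp (ln ((C+1)/\<epsilon>)) = (C+1)/\<epsilon>" using C0 e by simp
    finally have ea: "(C+1)/\<epsilon> \<le> exp a" .
    hence "C + 1 \<le> \<epsilon> * exp a" using e by (simp add: divide_le_eq mult.commute)
    hence "C \<le> \<epsilon> * (1 + exp a)" using e by (simp add: algebra_simps)
    hence Ce: "C / (1 + exp a) \<le> \<epsilon>" by (simp add: divide_le_eq add_pos_pos mult.commute)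
    have eq: "(real N + 1) * (1 - sigmoid a) * M = C / (1 + exp a)"
      unfolding C_def one_minus_sig by simp
    have each: "\<forall>k\<in>{1..N}. \<bar>TNN N x y dN a (x k) - y k\<bar> \<le> \<epsilon>"
      using bound[OF a0] eq Ce by fastforce
    have "(\<Sum>k=1..N. \<bar>TNN N x y dN a (x k) - y k\<bar>) \<le> real N * \<epsilon>"
      using sum_bounded_above[of "{1..N}" "\<lambda>k. \<bar>TNN N x y dN a (x k) - y k\<bar>" \<epsilon>] each by simp
    hence avg: "(\<Sum>k=1..N. \<bar>TNN N x y dN a (x k) - y k\<bar>) / real N \<le> \<epsilon>"
      using N by (simp add: divide_le_eq mult.commute)
    show "\<exists>a>0. (\<forall>k\<in>{1..N}. \<bar>TNN N x y dN a (x k) - y k\<bar> \<le> \<epsilon>)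
             \<and> (\<Sum>k=1..N. \<bar>TNN N x y dN a (x k) - y k\<bar>) / real N \<le> \<epsilon>"
      using a0 each avg by blast
  qed
qed

end
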